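(* Let $K\ge2$, $r\in[0,1]^K$ with a unique maximizing index $a^*$, $\pi^*$ the point mass on $a^*$, and $g(\theta)=\pi_\theta^\top r$ with $\pi_\theta=\mathrm{softmax}(\theta)$. Let $\theta_1\in\mathbb{R}^K$ and $\theta_{t+1}=\theta_t+\eta\,\nabla g(\theta_t)/\|\nabla g(\theta_t)\|_2$ with $\eta=1/6$. Then $c:=\inf_{t\ge1}\pi_{\theta_t}(a^* )>0$ (a constant depending on $r$ and $\theta_1$ but not on $t$), and for all $t\ge1$, $$(\pi^*-\pi_{\theta_t})^\top r\le e^{-\frac{c\,(t-1)}{12}}\,(\pi^*-\pi_{\theta_1})^\top r.$$
   Context: $\mathrm{softmax}(\theta)(a)=e^{\theta(a)}/\sum_{a'}e^{\theta(a')}$. *)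

theory Defs
  imports "HOL-Analysis.Analysis"
begin

text \<open>Action set = finite type 'k; vectors in R^K are real^'k (norm = Euclidean 2-norm).\<close>

definition softmax :: "real^'k \<Rightarrow> real^'k" where
  "softmax \<theta> = (\<chi> a. exp (\<theta> $ a) / (\<Sum>a'\<in>UNIV. exp (\<theta> $ a')))"

definition expected_reward :: "real^'k \<Rightarrow> real^'k \<Rightarrow> real" where
  "expected_reward r \<theta> = softmax \<theta> \<bullet> r"

definition grad :: "('a::real_inner \<Rightarrow> real) \<Rightarrow> 'a \<Rightarrow> 'a" where
  "grad f x = (THE D. GDERIV f x :> D)"

definition point_mass :: "'k \<Rightarrow> real^'k" where
  "point_mass a = axis a 1"

end

theory Submission
  imports Defs
begin


definition Zs :: "real^'k \<Rightarrow> real" where "Zs \<theta> = (\<Sum>a\<in>UNIV. exp (\<theta> $ a))"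

lemma Zs_pos: "Zs \<theta> > 0"
  unfolding Zs_def by (intro sum_pos) auto

lemma softmax_nth: "softmax \<theta> $ a = exp (\<theta> $ a) / Zs \<theta>"
  by (simp add: softmax_def Zs_def)

lemma er_eq: "expected_reward r \<theta> = (\<Sum>a\<in>UNIV. exp (\<theta> $ a) * r $ a) / Zs \<theta>"
  unfolding expected_reward_def inner_vec_def softmax_nth
  by (simp add: sum_divide_distrib)

definition GG :: "real^'k \<Rightarrow> real^'k \<Rightarrow> real^'k" where
  "GG r \<theta> = (\<chi> a. softmax \<theta> $ a * (r $ a - expected_reward r \<theta>))"

lemma er_deriv: "(expected_reward r has_derivative (\<lambda>h. h \<bullet> GG r \<theta>)) (at \<theta>)"
proof -
  have e: "expected_reward r = (\<lambda>\<theta>. (\<Sum>a\<in>UNIV. exp (\<theta> $ a) * r $ a) / (\<Sum>a\<in>UNIV. exp (\<theta> $ a)))"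
    by (rule ext) (simp add: er_eq Zs_def)
  have d1: "((\<lambda>\<theta>. \<theta> $ a) has_derivative (\<lambda>h. h $ a)) (at \<theta>)" for a
    by (rule bounded_linear_imp_has_derivative) (rule bounded_linear_vec_nth)
  have "((\<lambda>\<theta>. (\<Sum>a\<in>UNIV. exp (\<theta> $ a) * r $ a) / (\<Sum>a\<in>UNIV. exp (\<theta> $ a))) has_derivative
      (\<lambda>h. h \<bullet> GG r \<theta>)) (at \<theta>)"
    apply (rule derivative_eq_intros d1 refl | simp add: Zs_pos[unfolded Zs_def, THEN less_imp_neq, symmetric])+
    apply (rule ext)
    subgoal for h
    proof -
      define N where "N = (\<Sum>a\<in>UNIV. exp (\<theta> $ a) * r $ a)"
      have Z: "Zs \<theta> \<noteq> 0" using Zs_pos[of \<theta>] by simp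
      have "h \<bullet> GG r \<theta> = (\<Sum>a\<in>UNIV. h $ a * exp (\<theta> $ a) * r $ a / Zs \<theta> - (N / (Zs \<theta>*Zs \<theta>)) * (h $ a * exp (\<theta> $ a)))"
        unfolding GG_def inner_vec_def softmax_nth er_eq vec_lambda_beta N_def[symmetric]
        using Z by (intro sum.cong refl) (simp add: field_simps)
      also have "\<dots> = (\<Sum>a\<in>UNIV. h $ a * exp (\<theta> $ a) * r $ a) / Zs \<theta> - (N / (Zs \<theta>*Zs \<theta>)) * (\<Sum>a\<in>UNIV. h $ a * exp (\<theta> $ a))"
        by (simp add: sum_subtractf sum_divide_distrib sum_distrib_left)
      finally show ?thesis unfolding Zs_def N_def
        by (simp add: field_simps)
    qed
    done
  then show ?thesis by (simp add: e)
qed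

lemma grad_eq: "grad (expected_reward r) \<theta> = GG r \<theta>"
  unfolding grad_def
proof (rule the_equality)
  show "GDERIV (expected_reward r) \<theta> :> GG r \<theta>"
    unfolding gderiv_def by (rule er_deriv)
next
  fix D assume "GDERIV (expected_reward r) \<theta> :> D"
  then have "(expected_reward r has_derivative (\<lambda>h. h \<bullet> D)) (at \<theta>)" unfolding gderiv_def .
  from has_derivative_unique[OF this er_deriv] have "\<And>h. h \<bullet> D = h \<bullet> GG r \<theta>" by metis
  from this[of "D - GG r \<theta>"] have "(D - GG r \<theta>) \<bullet> (D - GG r \<theta>) = 0"
    by (simp add: inner_diff_right)
  then show "D = GG r \<theta>" by simp
qed

lemma sum_softmax: "(\<Sum>a\<in>UNIV. softmax \<theta> $ a) = 1"
  using Zs_pos[of \<theta>] by (simp add: softmax_nth sum_divide_distrib[symmetric] Zs_def[symmetric])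

lemma softmax_pos: "softmax \<theta> $ a > 0"
  using Zs_pos[of \<theta>] by (simp add: softmax_nth)

lemma softmax_nonneg[simp]: "softmax \<theta> $ a \<ge> 0"
  using softmax_pos[of \<theta> a] by simp

lemma er_sum: "expected_reward r \<theta> = (\<Sum>a\<in>UNIV. softmax \<theta> $ a * r $ a)"
  by (simp add: expected_reward_def inner_vec_def)

lemma GG_nth: "GG r \<theta> $ a = softmax \<theta> $ a * (r $ a - expected_reward r \<theta>)"
  by (simp add: GG_def)

lemma GG_sum: "(\<Sum>a\<in>UNIV. GG r \<theta> $ a) = 0"
  by (simp add: GG_nth right_diff_distrib sum_subtractf er_sum[symmetric] sum_distrib_right[symmetric] sum_softmax)

definition step :: "real^'k \<Rightarrow> real^'k \<Rightarrow> real^'k" where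
  "step r \<theta> = \<theta> + (1/6) *\<^sub>R ((1 / norm (GG r \<theta>)) *\<^sub>R GG r \<theta>)"

lemma step_softmax:
  fixes r \<theta> :: "real^'k" and a :: 'k
  defines "u \<equiv> (\<lambda>a. GG r \<theta> $ a / (6 * norm (GG r \<theta>)))"
  shows "softmax (step r \<theta>) $ a = softmax \<theta> $ a * exp (u a) / (\<Sum>b\<in>UNIV. softmax \<theta> $ b * exp (u b))"
proof -
  have s: "step r \<theta> $ b = \<theta> $ b + u b" for b
    by (simp add: step_def u_def)
  have z: "Zs (step r \<theta>) = (\<Sum>b\<in>UNIV. exp (\<theta> $ b) * exp (u b))"
    unfolding Zs_def s exp_add ..
  have w: "(\<Sum>b\<in>UNIV. exp (\<theta> $ b) / Zs \<theta> * exp (u b)) = (\<Sum>b\<in>UNIV. exp (\<theta> $ b) * exp (u b)) / Zs \<theta>"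
    unfolding sum_divide_distrib by (simp add: field_simps)
  have S: "(\<Sum>b\<in>UNIV. exp (\<theta> $ b) * exp (u b)) > 0" by (intro sum_pos) auto
  show ?thesis using Zs_pos[of \<theta>] S
    unfolding softmax_nth z s exp_add w
    by (simp only: divide_divide_eq_right times_divide_eq_left) (simp add: field_simps)
qed

lemma exp_key:
  fixes s u :: real
  assumes "\<bar>u\<bar> \<le> 1/6" "0 \<le> s * u"
  shows "s * (exp u - 1) \<ge> (5/6) * (s * u)"
proof (cases "u \<ge> 0")
  case True
  have e: "exp u - 1 \<ge> u" using exp_ge_add_one_self[of u] by linarith
  show ?thesis
  proof (cases "u = 0")
    case False
    then have "s \<ge> 0" using True assms(2) by (smt (verit) mult_neg_pos)
    then have "s * (exp u - 1) \<ge> s * u" using e by (simp add: mult_left_mono)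
    moreover have "s * u \<ge> (5/6) * (s * u)" using assms(2) by simp
    ultimately show ?thesis by linarith
  qed simp
next
  case False
  then have u: "u < 0" by simp
  then have s: "s \<le> 0" using assms(2) by (smt (verit) mult_pos_neg)
  have e1: "exp (-u) \<ge> 1 - u" using exp_ge_add_one_self[of "-u"] by simp
  have e2: "exp u * exp (-u) = 1" by (simp add: exp_minus_inverse)
  have "exp u * (1 - u) \<le> exp u * exp (-u)" using e1 by (intro mult_left_mono) auto
  then have "exp u * (1 - u) \<le> 1" using e2 by simp
  moreover have "(1 + (5/6) * u) * (1 - u) \<ge> 1"
  proof -
    have "0 \<le> (-u) * (1 + 5*u)" using u assms(1) by (intro mult_nonneg_nonneg) auto
    then show ?thesis by (simp add: algebra_simps)
  qed
  ultimately have "exp u * (1 - u) \<le> (1 + (5/6) * u) * (1 - u)" by linarith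
  then have "exp u \<le> 1 + (5/6) * u" using u by (simp add: mult_le_cancel_right)
  then have "exp u - 1 \<le> (5/6) * u" by simp
  from mult_left_mono_neg[OF this s] show ?thesis by (simp add: algebra_simps)
qed


locale bandit =
  fixes r :: "real^'k" and astar :: 'k
  assumes card2: "CARD('k) \<ge> 2"
    and rb: "\<forall>a. 0 \<le> r $ a \<and> r $ a \<le> 1"
    and rmax: "\<forall>a. a \<noteq> astar \<longrightarrow> r $ a < r $ astar"
begin

lemma ex_other: "\<exists>a. a \<noteq> astar"
proof (rule ccontr)
  assume "\<not> ?thesis"
  then have "UNIV = {astar}" by auto
  then have "CARD('k) = 1" by (metis card.empty card_insert_disjoint empty_iff finite.emptyI One_nat_def)
  with card2 show False by simp
qed

lemma er_lt: "expected_reward r \<theta> < r $ astar"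
proof -
  obtain a where a: "a \<noteq> astar" using ex_other by blast
  have "(\<Sum>b\<in>UNIV. softmax \<theta> $ b * r $ b) < (\<Sum>b\<in>UNIV. softmax \<theta> $ b * r $ astar)"
  proof (rule sum_strict_mono_ex1)
    show "\<forall>x\<in>UNIV. softmax \<theta> $ x * r $ x \<le> softmax \<theta> $ x * r $ astar"
      using rmax softmax_pos by (metis less_eq_real_def mult_left_mono order_refl)
    show "\<exists>x\<in>UNIV. softmax \<theta> $ x * r $ x < softmax \<theta> $ x * r $ astar"
      using rmax a softmax_pos by (metis UNIV_I mult_strict_left_mono)
  qed simp
  then show ?thesis by (simp add: er_sum sum_distrib_right[symmetric] sum_softmax)
qed

lemma er_bounds: "0 \<le> expected_reward r \<theta>" "expected_reward r \<theta> \<le> 1"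
proof -
  show "0 \<le> expected_reward r \<theta>" unfolding er_sum
    using rb softmax_pos[of \<theta>] by (intro sum_nonneg mult_nonneg_nonneg) (auto simp: less_imp_le)
  have "(\<Sum>b\<in>UNIV. softmax \<theta> $ b * r $ b) \<le> (\<Sum>b\<in>UNIV. softmax \<theta> $ b * 1)"
    using rb by (intro sum_mono mult_left_mono) auto
  then show "expected_reward r \<theta> \<le> 1" by (simp add: er_sum sum_softmax)
qed

lemma lojas: "norm (GG r \<theta>) \<ge> softmax \<theta> $ astar * (r $ astar - expected_reward r \<theta>)"
  using component_le_norm_cart[of "GG r \<theta>" astar] er_lt[of \<theta>] softmax_pos[of \<theta> astar]
  by (simp add: GG_nth)

lemma GG_pos: "norm (GG r \<theta>) > 0"
  using lojas[of \<theta>] er_lt[of \<theta>] softmax_pos[of \<theta> astar]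
  by (smt (verit) mult_pos_pos)


lemma progress: "expected_reward r (step r \<theta>) - expected_reward r \<theta> \<ge> norm (GG r \<theta>) / 12"
proof -
  define N where "N = norm (GG r \<theta>)"
  define p where "p = (\<lambda>a. softmax \<theta> $ a)"
  define g where "g = expected_reward r \<theta>"
  define u where "u = (\<lambda>a. GG r \<theta> $ a / (6 * N))"
  define W where "W = (\<Sum>b\<in>UNIV. p b * exp (u b))"
  have N: "N > 0" using GG_pos N_def by simp
  have sp: "softmax (step r \<theta>) $ a = p a * exp (u a) / W" for a
    using step_softmax[of r \<theta> a] unfolding p_def u_def W_def N_def by simp
  have Wpos: "W > 0" unfolding W_def p_def by (intro sum_pos) (auto simp: softmax_pos)
  have ub: "\<bar>u a\<bar> \<le> 1/6" for a
    using component_le_norm_cart[of "GG r \<theta>" a] N unfolding u_def N_def[symmetric]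
    by (simp add: abs_div divide_le_eq)
  have e16: "exp (1/6::real) \<le> 43/36"
    using exp_bound[of "1/6::real"] by (simp add: power2_eq_square)
  have Wle: "W \<le> 43/36"
  proof -
    have "W \<le> (\<Sum>b\<in>UNIV. p b * (43/36))" unfolding W_def
    proof (intro sum_mono mult_left_mono)
      fix b
      have "exp (u b) \<le> exp (1/6)" using ub[of b] by simp
      then show "exp (u b) \<le> 43/36" using e16 by linarith
    qed (simp add: p_def)
    also have "\<dots> = (\<Sum>b\<in>UNIV. p b) * (43/36)" by (simp only: sum_distrib_right)
    also have "\<dots> = 43/36" by (simp add: p_def sum_softmax)
    finally show ?thesis .
  qed
  have psum: "(\<Sum>a\<in>UNIV. p a) = 1" by (simp add: p_def sum_softmax)
  have gs: "(\<Sum>a\<in>UNIV. p a * (r $ a - g)) = 0"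
    using GG_sum[of r \<theta>] by (simp add: GG_nth p_def g_def)
  have gnew: "expected_reward r (step r \<theta>) = (\<Sum>a\<in>UNIV. p a * exp (u a) * r $ a) / W"
    by (simp add: er_sum sp sum_divide_distrib)
  have "(\<Sum>a\<in>UNIV. p a * exp (u a) * r $ a) - g * W = (\<Sum>a\<in>UNIV. p a * (r $ a - g) * (exp (u a) - 1)) + (\<Sum>a\<in>UNIV. p a * (r $ a - g))"
    unfolding W_def sum_distrib_left sum.distrib[symmetric] sum_subtractf[symmetric]
    by (intro sum.cong refl) (simp add: algebra_simps)
  then have diff: "expected_reward r (step r \<theta>) - g = (\<Sum>a\<in>UNIV. p a * (r $ a - g) * (exp (u a) - 1)) / W"
    using gs Wpos unfolding gnew by (simp add: field_simps)
  have sq: "(\<Sum>a\<in>UNIV. (GG r \<theta> $ a) * (GG r \<theta> $ a)) = N * N"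
    using power2_norm_eq_inner[of "GG r \<theta>"] unfolding N_def inner_vec_def power2_eq_square by simp
  have "(\<Sum>a\<in>UNIV. p a * (r $ a - g) * (exp (u a) - 1)) \<ge> (\<Sum>a\<in>UNIV. (5/36) * ((GG r \<theta> $ a) * (GG r \<theta> $ a)) / N)"
  proof (intro sum_mono)
    fix a
    have GGa: "GG r \<theta> $ a = p a * (r $ a - g)" by (simp add: GG_nth p_def g_def)
    have "u a = GG r \<theta> $ a / (6 * N)" by (simp add: u_def)
    have "0 \<le> GG r \<theta> $ a * u a" using N unfolding u_def
      by (simp add: mult_nonneg_nonneg zero_le_divide_iff zero_le_mult_iff)
    from exp_key[OF ub this] have "GG r \<theta> $ a * (exp (u a) - 1) \<ge> 5/6 * (GG r \<theta> $ a * u a)" .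
    then show "(5/36) * ((GG r \<theta> $ a) * (GG r \<theta> $ a)) / N \<le> p a * (r $ a - g) * (exp (u a) - 1)"
      using N unfolding GGa u_def by (simp add: field_simps)
  qed
  also have "(\<Sum>a\<in>UNIV. (5/36) * ((GG r \<theta> $ a) * (GG r \<theta> $ a)) / N) = (5/36) * N"
    using N by (simp add: sum_divide_distrib[symmetric] sum_distrib_left[symmetric] sq)
  finally have num: "(\<Sum>a\<in>UNIV. p a * (r $ a - g) * (exp (u a) - 1)) \<ge> (5/36) * N" .
  have "(5/36) * N / W \<ge> (5/36) * N / (43/36)"
    using N Wpos Wle by (intro divide_left_mono) auto
  moreover have "(\<Sum>a\<in>UNIV. p a * (r $ a - g) * (exp (u a) - 1)) / W \<ge> (5/36) * N / W"
    using num Wpos by (intro divide_right_mono) auto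
  ultimately have "expected_reward r (step r \<theta>) - g \<ge> (5/36) * N / (43/36)" using diff by linarith
  moreover have "(5/36) * N / (43/36) \<ge> N / 12" using N by simp
  ultimately show ?thesis unfolding N_def g_def by linarith
qed

lemma pstar_mono:
  assumes H: "\<forall>a. a \<noteq> astar \<longrightarrow> r $ a < expected_reward r \<theta>"
  shows "softmax (step r \<theta>) $ astar \<ge> softmax \<theta> $ astar"
proof -
  define N where "N = norm (GG r \<theta>)"
  define p where "p = (\<lambda>a. softmax \<theta> $ a)"
  define u where "u = (\<lambda>a. GG r \<theta> $ a / (6 * N))"
  define W where "W = (\<Sum>b\<in>UNIV. p b * exp (u b))"
  have N: "N > 0" using GG_pos N_def by simp
  have sp: "softmax (step r \<theta>) $ a = p a * exp (u a) / W" for a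
    using step_softmax[of r \<theta> a] unfolding p_def u_def W_def N_def by simp
  have Wpos: "W > 0" unfolding W_def p_def by (intro sum_pos) (auto simp: softmax_pos)
  have uu: "u a \<le> u astar" for a
  proof (cases "a = astar")
    case False
    then have "r $ a - expected_reward r \<theta> \<le> 0" using H by force
    then have "GG r \<theta> $ a \<le> 0" using softmax_pos[of \<theta> a]
      by (simp add: GG_nth mult_nonneg_nonpos)
    moreover have "GG r \<theta> $ astar \<ge> 0" using er_lt[of \<theta>] softmax_pos[of \<theta> astar]
      by (simp add: GG_nth)
    ultimately show ?thesis using N unfolding u_def by (simp add: divide_right_mono)
  qed simp
  have "W \<le> (\<Sum>b\<in>UNIV. p b * exp (u astar))" unfolding W_def
    using uu by (intro sum_mono mult_left_mono) (auto simp: p_def)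
  also have "\<dots> = exp (u astar)" by (simp add: p_def sum_distrib_right[symmetric] sum_softmax)
  finally have "W \<le> exp (u astar)" .
  then have "p astar * exp (u astar) / W \<ge> p astar * exp (u astar) / exp (u astar)"
    using Wpos by (intro divide_left_mono mult_nonneg_nonneg) (auto simp: p_def)
  then show ?thesis by (simp add: sp p_def)
qed

lemma Qstep:
  assumes D: "astar \<notin> D" "D \<noteq> {}" and m: "m > 0"
    and Dlow: "\<forall>d\<in>D. r $ d + m \<le> expected_reward r \<theta>"
    and nD: "\<forall>a. a \<notin> D \<longrightarrow> expected_reward r \<theta> \<le> r $ a"
  shows "(\<Sum>d\<in>D. softmax (step r \<theta>) $ d) / softmax (step r \<theta>) $ astar
     \<le> (1 - (1 - exp (- m / (12 * card D))) / card D) * ((\<Sum>d\<in>D. softmax \<theta> $ d) / softmax \<theta> $ astar)"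
proof -
  define N where "N = norm (GG r \<theta>)"
  define p where "p = (\<lambda>a. softmax \<theta> $ a)"
  define g where "g = expected_reward r \<theta>"
  define u where "u = (\<lambda>a. GG r \<theta> $ a / (6 * N))"
  define W where "W = (\<Sum>b\<in>UNIV. p b * exp (u b))"
  define k where "k = real (card D)"
  define PD where "PD = (\<Sum>d\<in>D. p d)"
  define E where "E = exp (- m / (12 * k))"
  have N: "N > 0" using GG_pos N_def by simp
  have sp: "softmax (step r \<theta>) $ a = p a * exp (u a) / W" for a
    using step_softmax[of r \<theta> a] unfolding p_def u_def W_def N_def by simp
  have Wpos: "W > 0" unfolding W_def p_def by (intro sum_pos) (auto simp: softmax_pos)
  have pp: "p a > 0" for a by (simp add: p_def softmax_pos)
  have finD: "finite D" by simp
  have k: "k \<ge> 1" unfolding k_def using D(2) finD by (simp add: Suc_le_eq card_gt_0_iff)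
  have PD: "PD > 0" unfolding PD_def using D(2) finD pp by (intro sum_pos) auto
  have g1: "g \<le> 1" using er_bounds unfolding g_def by simp
  have ustar: "u astar \<ge> 0" using er_lt[of \<theta>] softmax_pos[of \<theta> astar] N
    by (simp add: u_def GG_nth)
  have "(\<Sum>d\<in>D. softmax (step r \<theta>) $ d) / softmax (step r \<theta>) $ astar
      = (\<Sum>d\<in>D. p d * exp (u d)) / (p astar * exp (u astar))"
    using Wpos pp[of astar] by (simp add: sp sum_divide_distrib[symmetric])
  also have "\<dots> \<le> (\<Sum>d\<in>D. p d * exp (u d)) / p astar"
  proof -
    have "p astar \<le> p astar * exp (u astar)" using pp[of astar] ustar by simp
    then show ?thesis using pp[of astar]
      by (intro divide_left_mono sum_nonneg) (auto simp: less_imp_le pp)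
  qed
  finally have L1: "(\<Sum>d\<in>D. softmax (step r \<theta>) $ d) / softmax (step r \<theta>) $ astar
      \<le> (\<Sum>d\<in>D. p d * exp (u d)) / p astar" .
  have GGa: "GG r \<theta> $ a = p a * (r $ a - g)" for a by (simp add: GG_nth p_def g_def)
  have "N \<le> (\<Sum>a\<in>UNIV. \<bar>GG r \<theta> $ a\<bar>)" unfolding N_def by (rule norm_le_l1_cart)
  also have "\<dots> \<le> (\<Sum>a\<in>UNIV. GG r \<theta> $ a + 2 * (if a \<in> D then p a else 0))"
  proof (intro sum_mono)
    fix a
    show "\<bar>GG r \<theta> $ a\<bar> \<le> GG r \<theta> $ a + 2 * (if a \<in> D then p a else 0)"
    proof (cases "a \<in> D")
      case True
      have "0 \<le> r $ a" using rb by simp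
      then have "r $ a - g \<le> 0" "g - r $ a \<le> 1" using True Dlow m g1 unfolding g_def by force+
      then have "p a * (g - r $ a) \<le> p a" "p a * (r $ a - g) \<le> 0"
        using pp[of a] by (auto simp: mult_nonneg_nonpos mult_left_le)
      then show ?thesis using True unfolding GGa by (simp add: algebra_simps)
    next
      case False
      then have "r $ a - g \<ge> 0" using nD unfolding g_def by force
      then show ?thesis using False pp[of a] unfolding GGa by simp
    qed
  qed
  also have "\<dots> = 2 * PD"
    by (simp add: sum.distrib GG_sum sum_distrib_left[symmetric] PD_def sum.If_cases)
  finally have N2: "N \<le> 2 * PD" .
  have ud: "u d \<le> - (m / 12) * (p d / PD)" if "d \<in> D" for d
  proof -
    have "r $ d - g \<le> - m" using Dlow that unfolding g_def by force
    then have "p d * (r $ d - g) \<le> - (p d * m)" using pp[of d]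
      by (metis minus_mult_right mult_left_mono less_imp_le)
    then have "u d \<le> - (p d * m) / (6 * N)" unfolding u_def GGa using N
      by (intro divide_right_mono) auto
    also have "\<dots> \<le> - (p d * m) / (12 * PD)"
    proof -
      have "p d * m / (12 * PD) \<le> p d * m / (6 * N)"
        using N N2 PD pp[of d] m by (intro divide_left_mono) auto
      then show ?thesis by simp
    qed
    finally show ?thesis by (simp add: field_simps)
  qed
  obtain d0 where d0: "d0 \<in> D" "\<forall>d\<in>D. p d \<le> p d0"
  proof -
    have "Max (p ` D) \<in> p ` D" using D(2) finD by (intro Max_in) auto
    then obtain d0 where "d0 \<in> D" "p d0 = Max (p ` D)" by auto
    moreover have "\<forall>d\<in>D. p d \<le> Max (p ` D)" using finD by auto
    ultimately show ?thesis using that by auto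
  qed
  have PDk: "PD \<le> k * p d0" unfolding PD_def k_def using d0(2) sum_bounded_above[of D p "p d0"] by auto
  have ud0: "u d0 \<le> - m / (12 * k)"
  proof -
    have "p d0 / PD \<ge> 1 / k" using PDk PD k by (simp add: field_simps)
    then have "(m / 12) * (p d0 / PD) \<ge> (m/12) * (1 / k)" using m by (intro mult_left_mono) auto
    then show ?thesis using ud[OF d0(1)] by simp
  qed
  have E1: "E \<le> 1" unfolding E_def using m k by simp
  have S: "(\<Sum>d\<in>D. p d * exp (u d)) = p d0 * exp (u d0) + (\<Sum>d\<in>D - {d0}. p d * exp (u d))"
    using d0(1) finD by (simp add: sum.remove)
  have "(\<Sum>d\<in>D - {d0}. p d * exp (u d)) \<le> (\<Sum>d\<in>D - {d0}. p d)"
  proof (intro sum_mono)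
    fix d assume "d \<in> D - {d0}"
    then have dD: "d \<in> D" by simp
    have "0 \<le> (m / 12) * (p d / PD)" using m PD pp[of d] by simp
    then have "u d \<le> 0" using ud[OF dD] by linarith
    then show "p d * exp (u d) \<le> p d" using pp[of d] by (simp add: mult_left_le)
  qed
  also have "\<dots> = PD - p d0" unfolding PD_def using d0(1) finD by (simp add: sum_diff1)
  finally have S2: "(\<Sum>d\<in>D. p d * exp (u d)) \<le> p d0 * E + (PD - p d0)"
  proof -
    assume a: "(\<Sum>d\<in>D - {d0}. p d * exp (u d)) \<le> PD - p d0"
    have "exp (u d0) \<le> E" unfolding E_def using ud0 by simp
    then have "p d0 * exp (u d0) \<le> p d0 * E" using pp[of d0] by simp
    then show ?thesis using S a by linarith
  qed
  have "p d0 * (1 - E) \<ge> (PD / k) * (1 - E)"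
    using PDk k E1 by (intro mult_right_mono) (auto simp: field_simps)
  then have S3: "(\<Sum>d\<in>D. p d * exp (u d)) \<le> (1 - (1 - E) / k) * PD"
    using S2 by (simp add: algebra_simps)
  have "(\<Sum>d\<in>D. p d * exp (u d)) / p astar \<le> (1 - (1 - E) / k) * PD / p astar"
    using S3 pp[of astar] by (simp add: divide_right_mono)
  with L1 show ?thesis unfolding E_def k_def PD_def p_def by simp
qed

lemma eventually_good:
  fixes \<phi> :: "nat \<Rightarrow> real^'k"
  assumes rec: "\<And>n. \<phi> (Suc n) = step r (\<phi> n)"
  shows "\<exists>n. \<forall>a. a \<noteq> astar \<longrightarrow> r $ a < expected_reward r (\<phi> n)"
proof (rule ccontr)
  define G where "G = (\<lambda>n. expected_reward r (\<phi> n))"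
  define P where "P = (\<lambda>n. softmax (\<phi> n) $ astar)"
  have Gmono1: "G n \<le> G (Suc n)" for n
    using progress[of "\<phi> n"] norm_ge_zero[of "GG r (\<phi> n)"] unfolding G_def rec by linarith
  have Gmono: "n \<le> n' \<Longrightarrow> G n \<le> G n'" for n n' by (rule lift_Suc_mono_le[of G, OF Gmono1])
  assume "\<not> ?thesis"
  then have H: "\<forall>n. \<exists>a. a \<noteq> astar \<and> G n \<le> r $ a" unfolding G_def by (auto simp: not_less)
  define R2 where "R2 = Max ((\<lambda>a. r $ a) ` (UNIV - {astar}))"
  have ne: "UNIV - {astar} \<noteq> {}" using ex_other by blast
  have "R2 \<in> (\<lambda>a. r $ a) ` (UNIV - {astar})" unfolding R2_def using ne by (intro Max_in) auto
  then have R2lt: "R2 < r $ astar" using rmax by auto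
  have GR2: "G n \<le> R2" for n
  proof -
    obtain a where "a \<noteq> astar" "G n \<le> r $ a" using H by blast
    moreover have "r $ a \<le> R2" unfolding R2_def using \<open>a \<noteq> astar\<close> by (intro Max_ge) auto
    ultimately show ?thesis by linarith
  qed
  define L where "L = (SUP n. G n)"
  have bdd: "bdd_above (range G)" using er_bounds unfolding G_def by (intro bdd_aboveI[of _ 1]) auto
  have GL: "G n \<le> L" for n unfolding L_def using bdd by (intro cSUP_upper) auto
  have LR2: "L \<le> R2" unfolding L_def using GR2 by (intro cSUP_least) auto
  have L1: "L \<le> 1" using LR2 R2lt rb by (metis order.trans less_imp_le)
  define D where "D = {a. r $ a < L}"
  have astarD: "astar \<notin> D" using LR2 R2lt unfolding D_def by auto
  have nD: "\<forall>a. a \<notin> D \<longrightarrow> G n \<le> r $ a" for n using GL[of n] unfolding D_def by force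
  have key: "P n * (r $ astar - L) \<le> (\<Sum>d\<in>D. softmax (\<phi> n) $ d)" for n
  proof -
    let ?p = "\<lambda>a. softmax (\<phi> n) $ a"
    have "0 \<le> L - G n" using GL[of n] by simp
    also have "\<dots> = (\<Sum>a\<in>UNIV. ?p a * (L - r $ a))"
      by (simp add: G_def er_sum right_diff_distrib sum_subtractf sum_distrib_right[symmetric] sum_softmax)
    also have "\<dots> \<le> (\<Sum>a\<in>UNIV. (if a \<in> D then ?p a else 0) + (if a = astar then ?p a * (L - r $ astar) else 0))"
    proof (intro sum_mono)
      fix a
      show "?p a * (L - r $ a) \<le> (if a \<in> D then ?p a else 0) + (if a = astar then ?p a * (L - r $ astar) else 0)"
      proof (cases "a \<in> D")
        case True
        then have "a \<noteq> astar" using astarD by auto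
        moreover have "L - r $ a \<le> 1" using rb L1 by (smt (verit))
        ultimately show ?thesis using True by (simp add: mult_left_le)
      next
        case False
        then have "L - r $ a \<le> 0" unfolding D_def by simp
        then show ?thesis using False by (simp add: mult_nonneg_nonpos)
      qed
    qed
    also have "\<dots> = (\<Sum>d\<in>D. ?p d) + ?p astar * (L - r $ astar)"
      by (simp add: sum.distrib sum.If_cases)
    finally show ?thesis unfolding P_def by (simp add: algebra_simps)
  qed
  have Dne: "D \<noteq> {}"
  proof
    assume "D = {}"
    then have "P 0 * (r $ astar - L) \<le> 0" using key[of 0] by simp
    moreover have "P 0 * (r $ astar - L) > 0" using LR2 R2lt softmax_pos[of "\<phi> 0" astar] unfolding P_def
      by (intro mult_pos_pos) auto
    ultimately show False by simp
  qed
  define MD where "MD = Max ((\<lambda>a. r $ a) ` D)"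
  have MDL: "MD < L" unfolding MD_def using Dne
    by (subst Max_less_iff) (auto simp: D_def)
  then obtain n0 where n0: "MD < G n0" unfolding L_def using bdd by (subst (asm) less_cSUP_iff) auto
  define m where "m = G n0 - MD"
  have m: "m > 0" using n0 m_def by simp
  have Dlow: "\<forall>d\<in>D. r $ d + m \<le> G n" if "n \<ge> n0" for n
  proof
    fix d assume "d \<in> D"
    then have "r $ d \<le> MD" unfolding MD_def by (intro Max_ge) auto
    then show "r $ d + m \<le> G n" using Gmono[OF that] m_def by simp
  qed
  define Q where "Q = (\<lambda>n. (\<Sum>d\<in>D. softmax (\<phi> n) $ d) / P n)"
  define \<rho> where "\<rho> = 1 - (1 - exp (- m / (12 * card D))) / card D"
  have Qs: "Q (Suc n) \<le> \<rho> * Q n" if "n \<ge> n0" for n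
    using Qstep[OF astarD Dne m, of "\<phi> n"] Dlow[OF that] nD[of n]
    unfolding Q_def \<rho>_def P_def rec G_def by simp
  have Qpow: "Q (n0 + j) \<le> \<rho> ^ j * Q n0" for j
  proof (induction j)
    case (Suc j)
    have "Q (n0 + Suc j) \<le> \<rho> * Q (n0 + j)" using Qs[of "n0 + j"] by simp
    also have "\<dots> \<le> \<rho> * (\<rho> ^ j * Q n0)"
    proof (rule mult_left_mono[OF Suc.IH])
      have c1: "real (card D) \<ge> 1" using Dne by (simp add: Suc_le_eq card_gt_0_iff)
      have "exp (- m / (12 * card D)) > 0" by simp
      then have "1 - exp (- m / (12 * card D)) \<le> real (card D)" using c1 by linarith
      then have "(1 - exp (- m / (12 * card D))) / real (card D) \<le> 1" using c1 by (simp add: divide_le_eq)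
      then show "0 \<le> \<rho>" unfolding \<rho>_def by simp
    qed
    finally show ?case by simp
  qed simp
  have Qlow: "Q n \<ge> r $ astar - L" for n
    using key[of n] softmax_pos[of "\<phi> n" astar] unfolding Q_def P_def by (simp add: pos_le_divide_eq mult.commute)
  have rL: "r $ astar - L > 0" using LR2 R2lt by simp
  have Qn0: "Q n0 > 0" using Qlow[of n0] rL by simp
  have \<rho>1: "\<rho> < 1"
  proof -
    have "card D \<ge> 1" using Dne by (simp add: Suc_le_eq card_gt_0_iff)
    moreover have "exp (- m / (12 * card D)) < 1" using m \<open>card D \<ge> 1\<close> by simp
    ultimately show ?thesis unfolding \<rho>_def by simp
  qed
  obtain j where j: "\<rho> ^ j < (r $ astar - L) / Q n0"
    using real_arch_pow_inv[OF _ \<rho>1, of "(r $ astar - L) / Q n0"] rL Qn0 by auto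
  then have "\<rho> ^ j * Q n0 < r $ astar - L" using Qn0 by (simp add: field_simps)
  with Qpow[of j] Qlow[of "n0 + j"] show False by simp
qed

lemma pstar_lower:
  fixes \<phi> :: "nat \<Rightarrow> real^'k"
  assumes rec: "\<And>n. \<phi> (Suc n) = step r (\<phi> n)"
  shows "\<exists>M>0. \<forall>n. softmax (\<phi> n) $ astar \<ge> M"
proof -
  define G where "G = (\<lambda>n. expected_reward r (\<phi> n))"
  define P where "P = (\<lambda>n. softmax (\<phi> n) $ astar)"
  have Gmono1: "G n \<le> G (Suc n)" for n
    using progress[of "\<phi> n"] norm_ge_zero[of "GG r (\<phi> n)"] unfolding G_def rec by linarith
  have Gmono: "n \<le> n' \<Longrightarrow> G n \<le> G n'" for n n' by (rule lift_Suc_mono_le[of G, OF Gmono1])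
  obtain n1 where n1: "\<forall>a. a \<noteq> astar \<longrightarrow> r $ a < G n1" using eventually_good[of \<phi>, OF rec] unfolding G_def by blast
  have Pmono1: "P k \<le> P (Suc k)" if "k \<ge> n1" for k
  proof -
    have "\<forall>a. a \<noteq> astar \<longrightarrow> r $ a < expected_reward r (\<phi> k)"
      using n1 Gmono[OF that] unfolding G_def by force
    from pstar_mono[OF this] show ?thesis unfolding P_def rec .
  qed
  have Pafter: "P n1 \<le> P n" if "n \<ge> n1" for n
    using that
  proof (induction n rule: dec_induct)
    case (step k)
    then show ?case using Pmono1[of k] by simp
  qed simp
  define M where "M = Min (P ` {..n1})"
  have "M \<in> P ` {..n1}" unfolding M_def by (intro Min_in) auto
  then have Mpos: "M > 0" unfolding P_def using softmax_pos by auto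
  have "P n \<ge> M" for n
  proof (cases "n \<le> n1")
    case True then show ?thesis unfolding M_def by (intro Min_le) auto
  next
    case False
    then have "P n1 \<le> P n" using Pafter by simp
    moreover have "M \<le> P n1" unfolding M_def by (intro Min_le) auto
    ultimately show ?thesis by simp
  qed
  then show ?thesis using Mpos unfolding P_def by blast
qed
end


lemma pm_eq: "(point_mass astar - softmax \<theta>) \<bullet> r = r $ astar - expected_reward r \<theta>"
  unfolding point_mass_def inner_diff_left inner_axis' expected_reward_def by simp

theorem theorem2:
  fixes r :: "real^'k" and astar :: 'k and \<theta> :: "nat \<Rightarrow> real^'k"
  assumes "CARD('k) \<ge> 2"
    and "\<forall>a. 0 \<le> r $ a \<and> r $ a \<le> 1"
    and "\<forall>a. a \<noteq> astar \<longrightarrow> r $ a < r $ astar"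
    and "\<forall>t\<ge>1. \<theta> (Suc t) = \<theta> t + (1/6) *\<^sub>R
           ((1 / norm (grad (expected_reward r) (\<theta> t))) *\<^sub>R grad (expected_reward r) (\<theta> t))"
  shows "let c = (INF t\<in>{1::nat..}. softmax (\<theta> t) $ astar) in
           c > 0 \<and>
           (\<forall>t\<ge>1. (point_mass astar - softmax (\<theta> t)) \<bullet> r
                 \<le> exp (- (c * (real t - 1) / 12)) * ((point_mass astar - softmax (\<theta> 1)) \<bullet> r))"
proof -
  interpret bandit r astar using assms(1-3) by unfold_locales
  define \<phi> where "\<phi> = (\<lambda>n. \<theta> (Suc n))"
  have rec: "\<phi> (Suc n) = step r (\<phi> n)" for n
    using assms(4) unfolding \<phi>_def step_def grad_eq by simp
  obtain M where M: "M > 0" "\<forall>n. softmax (\<phi> n) $ astar \<ge> M" using pstar_lower[of \<phi>, OF rec] by blast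
  define c where "c = (INF t\<in>{1::nat..}. softmax (\<theta> t) $ astar)"
  have tM: "M \<le> softmax (\<theta> t) $ astar" if "t \<ge> 1" for t
  proof -
    have "t = Suc (t - 1)" using that by simp
    then show ?thesis using M(2)[rule_format, of "t - 1"] unfolding \<phi>_def by metis
  qed
  have cM: "M \<le> c" unfolding c_def by (rule cINF_greatest) (auto intro: tM)
  have cpos: "c > 0" using cM M by simp
  have bdd: "bdd_below ((\<lambda>t. softmax (\<theta> t) $ astar) ` {1..})"
    by (intro bdd_belowI[of _ 0]) auto
  have cle: "c \<le> softmax (\<phi> n) $ astar" for n
    unfolding c_def \<phi>_def by (rule cINF_lower[OF bdd]) simp
  define \<delta> where "\<delta> = (\<lambda>n. r $ astar - expected_reward r (\<phi> n))"
  have dpos: "\<delta> n \<ge> 0" for n using er_lt[of "\<phi> n"] unfolding \<delta>_def by simp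
  have dstep: "\<delta> (Suc n) \<le> exp (- (c / 12)) * \<delta> n" for n
  proof -
    have "\<delta> (Suc n) \<le> \<delta> n - norm (GG r (\<phi> n)) / 12"
      using progress[of "\<phi> n"] unfolding \<delta>_def rec by linarith
    also have "\<dots> \<le> \<delta> n - softmax (\<phi> n) $ astar * \<delta> n / 12"
      using lojas[of "\<phi> n"] unfolding \<delta>_def by linarith
    also have "\<dots> \<le> \<delta> n - c * \<delta> n / 12"
      using cle[of n] dpos[of n] by (simp add: mult_right_mono)
    also have "\<dots> = (1 - c / 12) * \<delta> n" by (simp add: algebra_simps)
    also have "\<dots> \<le> exp (- (c / 12)) * \<delta> n"
      using exp_ge_add_one_self[of "- (c/12)"] dpos[of n] by (intro mult_right_mono) auto
    finally show ?thesis .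
  qed
  have dall: "\<delta> n \<le> exp (- (c * real n / 12)) * \<delta> 0" for n
  proof (induction n)
    case (Suc n)
    have "\<delta> (Suc n) \<le> exp (- (c / 12)) * \<delta> n" by (rule dstep)
    also have "\<dots> \<le> exp (- (c / 12)) * (exp (- (c * real n / 12)) * \<delta> 0)"
      using Suc.IH by (intro mult_left_mono) auto
    also have "\<dots> = exp (- (c * real (Suc n) / 12)) * \<delta> 0"
    proof -
      have e: "- (c * real (Suc n) / 12) = - (c / 12) + - (c * real n / 12)" by (simp add: field_simps)
      show ?thesis unfolding e exp_add by (simp only: mult.assoc)
    qed
    finally show ?case .
  qed simp
  have final: "(point_mass astar - softmax (\<theta> t)) \<bullet> r
                 \<le> exp (- (c * (real t - 1) / 12)) * ((point_mass astar - softmax (\<theta> 1)) \<bullet> r)" if "t \<ge> 1" for t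
  proof -
    define n where "n = t - 1"
    have n: "t = Suc n" using that unfolding n_def by simp
    have rn: "real t - 1 = real n" unfolding n by simp
    have "\<delta> n \<le> exp (- (c * real n / 12)) * \<delta> 0" by (rule dall)
    then show ?thesis unfolding pm_eq rn unfolding \<delta>_def \<phi>_def n One_nat_def .
  qed
  show ?thesis unfolding Let_def c_def[symmetric] using cpos final by blast
qed

end
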